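(* For all configurations $C$ of the CK machine: if $C \to C'$, then $[\![C]\!] \xrightarrow{\tau} [\![C']\!]$; and if $[\![C]\!] \xrightarrow{\tau} P$, then there exists a configuration $C'$ such that $P = [\![C']\!]$.
   Context: HOcore processes: $P,Q ::= a(x).P \mid \overline{a}\langle P\rangle \mid P \parallel Q \mid x \mid 0$ ($a$ channel names, $x$ process variables, $a(x).P$ binds $x$, $\parallel$ associative and commutative with unit $0$). $\tau$-transitions: $\overline{a}\langle P\rangle \parallel a(x).Q \parallel R \xrightarrow{\tau} Q\{P/x\} \parallel R$ (communication between an output and an input on the same name in parallel; up to associativity/commutativity of $\parallel$, with inputs/outputs under input prefixes or inside messages unable to act). CK machine: values $v ::= x \mid \lambda x.t$; terms $t,s ::= v \mid t\,s$; stacks $\pi ::= [\mathrm{arg}\ t]::\pi \mid [\mathrm{fun}\ v]::\pi \mid []$; configurations $C ::= \langle t, \pi\rangle_{\mathrm{ev}} \mid \langle \pi, v\rangle_{\mathrm{cont}}$. Transitions: $\langle t\,s, \pi\rangle_{\mathrm{ev}} \to \langle t, [\mathrm{arg}\ s]::\pi\rangle_{\mathrm{ev}}$; $\langle v,\pi\rangle_{\mathrm{ev}}\to\langle\pi,v\rangle_{\mathrm{cont}}$; $\langle [\mathrm{arg}\ t]::\pi, v\rangle_{\mathrm{cont}} \to \langle t, [\mathrm{fun}\ v]::\pi\rangle_{\mathrm{ev}}$; $\langle [\mathrm{fun}\ \lambda x.t]::\pi, v\rangle_{\mathrm{cont}}\to\langle t\{v/x\},\pi\rangle_{\mathrm{ev}}$.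 Translation (channel names $c$, $val$, $b$; $p$ fresh): $[\![\langle t,\pi\rangle_{\mathrm{ev}}]\!] = [\![t]\!] \parallel \overline{c}\langle[\![\pi]\!]\rangle$; $[\![\langle\pi, v\rangle_{\mathrm{cont}}]\!] = [\![\pi]\!] \parallel \overline{val}\langle [\![v]\!]_v\rangle$; $[\![[]]\!] = \overline{b}\langle 0\rangle$; $[\![[\mathrm{arg}\ t]::\pi]\!] = \mathrm{Arg}([\![t]\!],[\![\pi]\!])$; $[\![[\mathrm{fun}\ v]::\pi]\!] = \mathrm{Fun}([\![v]\!]_v,[\![\pi]\!])$; $\mathrm{Arg}(P_t,P_\pi) = val(x).(P_t \parallel \overline{c}\langle \mathrm{Fun}(x, P_\pi)\rangle)$; $\mathrm{Fun}(P_v,P_\pi) = P_v \parallel \overline{c}\langle P_\pi\rangle$; $[\![x]\!]_v = x$; $[\![\lambda x.t]\!]_v = val(x).[\![t]\!]$; $[\![v]\!] = c(p).(p \parallel \overline{val}\langle[\![v]\!]_v\rangle)$; $[\![t\,s]\!] = c(p).([\![t]\!] \parallel \overline{c}\langle\mathrm{Arg}([\![s]\!], p)\rangle)$. *)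

theory Defs
  imports "HOL-Library.Multiset"
begin

text \<open>P || Q is multiset union, 0 is the empty multiset: this builds in associativity,
  commutativity and unit of parallel composition. Process variables are de Bruijn
  indices; a(x).P binds index 0 in P, so syntactic equality is alpha-equivalence.\<close>

type_synonym name = string

datatype atom = In name "atom multiset" | Out name "atom multiset" | PV nat

type_synonym proc = "atom multiset"

primrec shiftA :: "nat \<Rightarrow> atom \<Rightarrow> atom" where
  "shiftA k (PV n) = PV (if n < k then n else Suc n)"
| "shiftA k (In a P) = In a (image_mset (shiftA (Suc k)) P)"
| "shiftA k (Out a P) = Out a (image_mset (shiftA k) P)"

definition shiftP :: "nat \<Rightarrow> proc \<Rightarrow> proc" where
  "shiftP k P = image_mset (shiftA k) P"

primrec substA :: "nat \<Rightarrow> proc \<Rightarrow> atom \<Rightarrow> proc" where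
  "substA k R (PV n) = (if n = k then R else if n < k then {#PV n#} else {#PV (n - 1)#})"
| "substA k R (In a P) = {# In a (\<Sum>\<^sub># (image_mset (substA (Suc k) (shiftP 0 R)) P)) #}"
| "substA k R (Out a P) = {# Out a (\<Sum>\<^sub># (image_mset (substA k R) P)) #}"

definition substP :: "nat \<Rightarrow> proc \<Rightarrow> proc \<Rightarrow> proc" where
  "substP k R Q = \<Sum>\<^sub># (image_mset (substA k R) Q)"

inductive tau :: "proc \<Rightarrow> proc \<Rightarrow> bool" where
  comm: "tau ({# Out a P, In a Q #} + R) (substP 0 P Q + R)"

datatype tm = V val | App tm tm
     and val = X nat | Lam tm

primrec liftT :: "nat \<Rightarrow> tm \<Rightarrow> tm" and liftV :: "nat \<Rightarrow> val \<Rightarrow> val" where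
  "liftT k (V v) = V (liftV k v)"
| "liftT k (App t s) = App (liftT k t) (liftT k s)"
| "liftV k (X n) = X (if n < k then n else Suc n)"
| "liftV k (Lam t) = Lam (liftT (Suc k) t)"

primrec substT :: "nat \<Rightarrow> val \<Rightarrow> tm \<Rightarrow> tm" and substV :: "nat \<Rightarrow> val \<Rightarrow> val \<Rightarrow> val" where
  "substT k w (V v) = V (substV k w v)"
| "substT k w (App t s) = App (substT k w t) (substT k w s)"
| "substV k w (X n) = (if n = k then w else if n < k then X n else X (n - 1))"
| "substV k w (Lam t) = Lam (substT (Suc k) (liftV 0 w) t)"

datatype frame = FArg tm | FFun val

type_synonym stack = "frame list"

datatype conf = Ev tm stack | Cont stack val

inductive ck_step :: "conf \<Rightarrow> conf \<Rightarrow> bool" where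
  app:  "ck_step (Ev (App t s) \<pi>) (Ev t (FArg s # \<pi>))"
| val:  "ck_step (Ev (V v) \<pi>) (Cont \<pi> v)"
| arg:  "ck_step (Cont (FArg t # \<pi>) v) (Ev t (FFun v # \<pi>))"
| beta: "ck_step (Cont (FFun (Lam t) # \<pi>) v) (Ev (substT 0 v t) \<pi>)"

definition ch_c :: name where "ch_c = ''c''"
definition ch_val :: name where "ch_val = ''val''"
definition ch_b :: name where "ch_b = ''b''"

definition FunP :: "proc \<Rightarrow> proc \<Rightarrow> proc" where
  "FunP Pv Ppi = Pv + {# Out ch_c Ppi #}"

definition ArgP :: "proc \<Rightarrow> proc \<Rightarrow> proc" where
  "ArgP Pt Ppi = {# In ch_val (shiftP 0 Pt + {# Out ch_c (FunP {#PV 0#} (shiftP 0 Ppi)) #}) #}"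

primrec trT :: "tm \<Rightarrow> proc" and trV :: "val \<Rightarrow> proc" where
  "trT (V v) = {# In ch_c ({#PV 0#} + {# Out ch_val (shiftP 0 (trV v)) #}) #}"
| "trT (App t s) = {# In ch_c (shiftP 0 (trT t) + {# Out ch_c (ArgP (shiftP 0 (trT s)) {#PV 0#}) #}) #}"
| "trV (X n) = {# PV n #}"
| "trV (Lam t) = {# In ch_val (trT t) #}"

primrec trS :: "stack \<Rightarrow> proc" where
  "trS [] = {# Out ch_b {#} #}"
| "trS (f # \<pi>) = (case f of FArg t \<Rightarrow> ArgP (trT t) (trS \<pi>) | FFun v \<Rightarrow> FunP (trV v) (trS \<pi>))"

primrec trC :: "conf \<Rightarrow> proc" where
  "trC (Ev t \<pi>) = trT t + {# Out ch_c (trS \<pi>) #}"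
| "trC (Cont \<pi> v) = trS \<pi> + {# Out ch_val (trV v) #}"

end

theory Submission
  imports Defs
begin

lemma shiftP_empty[simp]: "shiftP k {#} = {#}" by (simp add: shiftP_def)
lemma shiftP_add[simp]: "shiftP k (A + B) = shiftP k A + shiftP k B" by (simp add: shiftP_def)
lemma shiftP_add_mset[simp]: "shiftP k (add_mset a A) = add_mset (shiftA k a) (shiftP k A)" by (simp add: shiftP_def)
lemma substP_empty[simp]: "substP k R {#} = {#}" by (simp add: substP_def)
lemma substP_add[simp]: "substP k R (A + B) = substP k R A + substP k R B" by (simp add: substP_def)
lemma substP_add_mset[simp]: "substP k R (add_mset a A) = substA k R a + substP k R A" by (simp add: substP_def)

lemma shiftA_In[simp]: "shiftA k (In a P) = In a (shiftP (Suc k) P)" by (simp add: shiftP_def)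
lemma shiftA_Out[simp]: "shiftA k (Out a P) = Out a (shiftP k P)" by (simp add: shiftP_def)
lemma substA_In[simp]: "substA k R (In a P) = {#In a (substP (Suc k) (shiftP 0 R) P)#}" by (simp add: substP_def)
lemma substA_Out[simp]: "substA k R (Out a P) = {#Out a (substP k R P)#}" by (simp add: substP_def)
declare shiftA.simps(2,3)[simp del] substA.simps(2,3)[simp del]

lemma shiftP_sum: "shiftP j (sum_mset M) = sum_mset (image_mset (shiftP j) M)"
  by (induction M) auto

lemma L1A: "substA k R (shiftA k a) = {#a#}"
proof (induction a arbitrary: k R)
  case (In x1 x2)
  have "substP (Suc k) (shiftP 0 R) (shiftP (Suc k) x2) = x2"
    unfolding substP_def shiftP_def using In
    by (simp add: image_mset.compositionality comp_def cong: image_mset_cong)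
  then show ?case by simp
next
  case (Out x1 x2)
  have "substP k R (shiftP k x2) = x2"
    unfolding substP_def shiftP_def using Out
    by (simp add: image_mset.compositionality comp_def cong: image_mset_cong)
  then show ?case by simp
qed auto

lemma L1: "substP k R (shiftP k Q) = Q"
  unfolding substP_def shiftP_def
  by (simp add: image_mset.compositionality comp_def L1A)

lemma L2A: "j \<le> k \<Longrightarrow> shiftA (Suc k) (shiftA j a) = shiftA j (shiftA k a)"
proof (induction a arbitrary: j k)
  case (In x1 x2)
  have "shiftP (Suc (Suc k)) (shiftP (Suc j) x2) = shiftP (Suc j) (shiftP (Suc k) x2)"
    unfolding shiftP_def using In
    by (simp add: image_mset.compositionality comp_def cong: image_mset_cong)
  then show ?case by simp
next
  case (Out x1 x2)
  have "shiftP (Suc k) (shiftP j x2) = shiftP j (shiftP k x2)"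
    unfolding shiftP_def using Out
    by (simp add: image_mset.compositionality comp_def cong: image_mset_cong)
  then show ?case by simp
qed auto

lemma L2: "j \<le> k \<Longrightarrow> shiftP (Suc k) (shiftP j Q) = shiftP j (shiftP k Q)"
  unfolding shiftP_def
  by (simp add: image_mset.compositionality comp_def L2A)

lemma substP_shiftP: "substP k R (shiftP j Q) = sum_mset (image_mset (\<lambda>x. substA k R (shiftA j x)) Q)"
  by (simp add: substP_def shiftP_def image_mset.compositionality comp_def)

lemma shiftP_substP: "shiftP j (substP k R Q) = sum_mset (image_mset (\<lambda>x. shiftP j (substA k R x)) Q)"
  by (simp add: substP_def shiftP_sum image_mset.compositionality comp_def)

lemma L3A: "j \<le> k \<Longrightarrow> shiftP j (substA k R a) = substA (Suc k) (shiftP j R) (shiftA j a)"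
proof (induction a arbitrary: j k R)
  case (In x1 x2)
  have "shiftP (Suc j) (substP (Suc k) (shiftP 0 R) x2) =
        substP (Suc (Suc k)) (shiftP (Suc j) (shiftP 0 R)) (shiftP (Suc j) x2)"
    unfolding substP_shiftP shiftP_substP using In by (simp cong: image_mset_cong)
  then show ?case by (simp add: L2)
next
  case (Out x1 x2)
  have "shiftP j (substP k R x2) = substP (Suc k) (shiftP j R) (shiftP j x2)"
    unfolding substP_shiftP shiftP_substP using Out by (simp cong: image_mset_cong)
  then show ?case by simp
qed (auto simp: shiftP_def)

lemma L3: "j \<le> k \<Longrightarrow> shiftP j (substP k R Q) = substP (Suc k) (shiftP j R) (shiftP j Q)"
  unfolding substP_shiftP shiftP_substP by (simp add: L3A)
  
lemma shiftP_single[simp]: "shiftP k {#a#} = {#shiftA k a#}" by (simp add: shiftP_def)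
lemma substP_single[simp]: "substP k R {#a#} = substA k R a" by (simp add: substP_def)

lemma L3': "substP (Suc k) (shiftP 0 R) (shiftP 0 Q) = shiftP 0 (substP k R Q)"
  using L3[of 0 k R Q] by simp

lemma L4: "(\<forall>k. trT (liftT k t) = shiftP k (trT t)) \<and> (\<forall>k. trV (liftV k v) = shiftP k (trV v))"
proof (induction rule: tm_val.induct)
  case (V x)
  then show ?case by (simp add: L2)
next
  case (App x1 x2)
  then show ?case by (simp add: L2 ArgP_def FunP_def)
qed auto

lemma L4V: "trV (liftV k v) = shiftP k (trV v)" using L4 by blast

lemma L5: "(\<forall>k w. substP k (trV w) (trT t) = trT (substT k w t)) \<and> (\<forall>k w. substP k (trV w) (trV v) = trV (substV k w v))"
proof (induction rule: tm_val.induct)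
  case (V x)
  then show ?case by (simp add: L3' L4V)
next
  case (App x1 x2)
  then show ?case by (simp add: L3' L4V ArgP_def FunP_def)
next
  case (Lam x)
  then show ?case by (simp add: L4V[symmetric])
qed auto

lemma L5T: "substP k (trV w) (trT t) = trT (substT k w t)" using L5 by blast

lemma tau_intro: "P = {#Out a S, In a Q#} + R \<Longrightarrow> P' = substP 0 S Q + R \<Longrightarrow> tau P P'"
  using tau.comm by blast

lemma step_tau: "ck_step C C' \<Longrightarrow> tau (trC C) (trC C')"
proof (induction rule: ck_step.induct)
  case (app t s \<pi>)
  show ?case
    by (rule tau_intro[where R="{#}" and a=ch_c and S="trS \<pi>" and Q="shiftP 0 (trT t) + {#Out ch_c (ArgP (shiftP 0 (trT s)) {#PV 0#})#}"]) (simp_all add: L1 L3' ArgP_def FunP_def add_mset_commute)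
next
  case (val v \<pi>)
  show ?case
    by (rule tau_intro[where R="{#}" and a=ch_c and S="trS \<pi>" and Q="{#PV 0#} + {#Out ch_val (shiftP 0 (trV v))#}"]) (simp_all add: L1 add_mset_commute)
next
  case (arg t \<pi> v)
  show ?case
    by (rule tau_intro[where R="{#}" and a=ch_val and S="trV v" and Q="shiftP 0 (trT t) + {#Out ch_c (FunP {#PV 0#} (shiftP 0 (trS \<pi>)))#}"]) (simp_all add: L1 ArgP_def FunP_def add_mset_commute)
next
  case (beta t \<pi> v)
  show ?case
    by (rule tau_intro[where R="{#Out ch_c (trS \<pi>)#}" and a=ch_val and S="trV v" and Q="trT t"]) (simp_all add: L5T FunP_def add_mset_commute)
qed

lemma tau_inv: "tau P P' \<Longrightarrow> \<exists>a S Q R. P = add_mset (Out a S) (add_mset (In a Q) R) \<and> P' = substP 0 S Q + R"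
  by (cases rule: tau.cases) auto

lemma chans[simp]: "ch_c \<noteq> ch_val" "ch_val \<noteq> ch_c" "ch_b \<noteq> ch_val" "ch_b \<noteq> ch_c"
  by (simp_all add: ch_c_def ch_val_def ch_b_def)

lemma part2: "tau (trC C) P \<Longrightarrow> \<exists>C'. P = trC C'"
proof -
  assume "tau (trC C) P"
  then obtain a S Q R where eq: "trC C = add_mset (Out a S) (add_mset (In a Q) R)"
    and P: "P = substP 0 S Q + R" using tau_inv by blast
  have m1: "Out a S \<in># trC C" and m2: "In a Q \<in># trC C - {#Out a S#}"
    and R: "R = trC C - {#Out a S#} - {#In a Q#}" using eq by simp_all
  show ?thesis
  proof (cases C)
    case (Ev t \<pi>)
    show ?thesis
    proof (cases t)
      case (V v)
      have "P = trC (Cont \<pi> v)" using m1 m2 R P Ev V by (auto simp: L1)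
      then show ?thesis by blast
    next
      case (App t1 t2)
      have "P = trC (Ev t1 (FArg t2 # \<pi>))" using m1 m2 R P Ev App
        by (auto simp: L1 L3' ArgP_def FunP_def)
      then show ?thesis by blast
    qed
  next
    case (Cont \<pi> v)
    show ?thesis
    proof (cases \<pi>)
      case Nil
      then show ?thesis using m1 m2 Cont by auto
    next
      case (Cons f \<pi>')
      show ?thesis
      proof (cases f)
        case (FArg t)
        have "P = trC (Ev t (FFun v # \<pi>'))" using m1 m2 R P Cont Cons FArg
          by (auto simp: L1 ArgP_def FunP_def)
        then show ?thesis by blast
      next
        case (FFun w)
        show ?thesis
        proof (cases w)
          case (X n)
          then show ?thesis using m1 m2 Cont Cons FFun by (auto simp: FunP_def)
        next
          case (Lam t)
          have "P = trC (Ev (substT 0 v t) \<pi>')" using m1 m2 R P Cont Cons FFun Lam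
            by (auto simp: L5T FunP_def)
          then show ?thesis by blast
        qed
      qed
    qed
  qed
qed

theorem theorem6p1:
  shows "(\<forall>C C'. ck_step C C' \<longrightarrow> tau (trC C) (trC C')) \<and>
         (\<forall>C P. tau (trC C) P \<longrightarrow> (\<exists>C'. P = trC C'))"
  using step_tau part2 by blast

end
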